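(* For every $a\in(-\infty,1)$, the map $R_a:\mathbb D_a\to\mathbb D_a$ is continuous with respect to the norm $\|\rho\,\cdot\|_{L^\infty}$.
   Context: Let $\rho(x)=(1+|x|)^{-1/2}$ and $\eta_a=\frac{1}{2^{9/2}(4+|a|)^3}$. $\mathbb D_a$ is the set of continuous even functions $\omega$ on $\mathbb R$ with $\|\rho\omega\|_{L^\infty}<\infty$ such that $\omega(0)=1$; $(1-x^2)_+\le\omega(x)\le1$ for all $x$; $\omega$ is non-increasing on $[0,\infty)$; $s\mapsto\omega(\sqrt s)$ is convex on $[0,\infty)$; and the left derivative satisfies $\omega'_-(1/2)\le-\eta_a$. $T(\omega)(x)=\frac1\pi\int_0^\infty\ln\left|\frac{x^2-y^2}{y^2}\right|\omega(y)\,dy$, $r(\omega)=\frac1\pi\int_0^\infty\frac{\omega(0)-\omega(y)}{y^2}\,dy$. For $a\ne0$, $R_a(\omega)(x)=\big(1-\frac{aT(\omega)(x)}{r(\omega)}\big)_+^{1/a}$; for $a=0$, $R_0(\omega)(x)=\exp\big(-\frac{T(\omega)(x)}{r(\omega)}\big)$. That $R_a$ maps $\mathbb D_a$ into itself is a separate result. *)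

theory Defs
  imports "HOL-Analysis.Analysis"
begin

definition rho :: "real \<Rightarrow> real" where
  "rho x = 1 / sqrt (1 + \<bar>x\<bar>)"

definition eta :: "real \<Rightarrow> real" where
  "eta a = 1 / (2 powr (9/2) * (4 + \<bar>a\<bar>) ^ 3)"

text \<open>Weighted sup norm  || rho f ||_{L^infty} (f continuous, so ess sup = sup).\<close>
definition wnorm :: "(real \<Rightarrow> real) \<Rightarrow> real" where
  "wnorm f = (SUP x. \<bar>rho x * f x\<bar>)"

definition Da :: "real \<Rightarrow> (real \<Rightarrow> real) set" where
  "Da a = {\<omega>. continuous_on UNIV \<omega>
            \<and> (\<forall>x. \<omega> (-x) = \<omega> x)
            \<and> bounded (range (\<lambda>x. rho x * \<omega> x))
            \<and> \<omega> 0 = 1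
            \<and> (\<forall>x. max 0 (1 - x\<^sup>2) \<le> \<omega> x \<and> \<omega> x \<le> 1)
            \<and> antimono_on {0..} \<omega>
            \<and> convex_on {0..} (\<lambda>s. \<omega> (sqrt s))
            \<and> (\<exists>d. ((\<lambda>t. (\<omega> t - \<omega> (1/2)) / (t - 1/2)) \<longlongrightarrow> d) (at_left (1/2))
                   \<and> d \<le> - eta a)}"

definition Top :: "(real \<Rightarrow> real) \<Rightarrow> real \<Rightarrow> real" where
  "Top \<omega> x = (1/pi) * (LINT y:{0<..}|lborel. ln \<bar>(x\<^sup>2 - y\<^sup>2) / y\<^sup>2\<bar> * \<omega> y)"

definition rfun :: "(real \<Rightarrow> real) \<Rightarrow> real" where
  "rfun \<omega> = (1/pi) * (LINT y:{0<..}|lborel. (\<omega> 0 - \<omega> y) / y\<^sup>2)"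

definition Ra :: "real \<Rightarrow> (real \<Rightarrow> real) \<Rightarrow> real \<Rightarrow> real" where
  "Ra a \<omega> x = (if a = 0 then exp (- Top \<omega> x / rfun \<omega>)
                else (max 0 (1 - a * Top \<omega> x / rfun \<omega>)) powr (1/a))"

end

theory Submission
  imports Defs "HOL-Real_Asymp.Real_Asymp" "HOL-Probability.Sinc_Integral"
begin


lemma piece3:
  shows "set_integrable lborel (einterval 1 \<infinity>) (\<lambda>t. - ln ((t^2-1)/t^2))"
    and "(LBINT t=1..\<infinity>. - ln ((t^2-1)/t^2)) = 2 * ln 2"
proof -
  let ?F = "\<lambda>t::real. - (t * ln ((t^2-1)/t^2) + ln ((t+1)/(t-1)))"
  have D: "DERIV ?F t :> - ln ((t^2-1)/t^2)" if "1 < ereal t" "ereal t < \<infinity>" for t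
  proof -
    from that have t: "t > 1" by simp
    have t2: "t^2 - 1 > 0" using t by (simp add: one_less_power)
    show ?thesis
      using t t2 apply (auto intro!: derivative_eq_intros simp: power2_eq_square)
      apply (subgoal_tac "t - 1 \<noteq> 0" "t + 1 \<noteq> 0" "t*t - 1 \<noteq> 0")
      apply (simp add: divide_simps)
      apply (simp add: algebra_simps)
      apply auto
      done
  qed
  have C: "isCont (\<lambda>t. - ln ((t^2-1)/t^2)) t" if "1 < ereal t" "ereal t < \<infinity>" for t
  proof -
    from that have t: "t > 1" by simp
    have h: "t^2 > 1" using t by (simp add: one_less_power)
    have h2: "t^2 \<noteq> 1" "(t^2-1)/t^2 > 0" using h by (auto intro!: divide_pos_pos)
    show ?thesis using t h2 by (intro continuous_intros) auto
  qed
  have N: "AE t in lborel. 1 < ereal t \<longrightarrow> ereal t < \<infinity> \<longrightarrow> 0 \<le> - ln ((t^2-1)/t^2)"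
  proof (intro AE_I2 impI)
    fix t assume "1 < ereal t"
    then have t: "t > 1" by simp
    have h: "t^2 > 1" using t by (simp add: one_less_power)
    have p: "(t^2-1)/t^2 > 0" using h by (auto intro!: divide_pos_pos)
    have q: "(t^2-1)/t^2 \<le> 1" using h by (auto simp: divide_le_eq_1)
    show "0 \<le> - ln ((t^2-1)/t^2)" using ln_le_zero_iff[OF p] q by simp
  qed
  have A: "((?F \<circ> real_of_ereal) \<longlongrightarrow> - (2 * ln 2)) (at_right 1)"
    unfolding ereal_tendsto_simps one_ereal_def by real_asymp
  have B: "((?F \<circ> real_of_ereal) \<longlongrightarrow> 0) (at_left \<infinity>)"
    unfolding ereal_tendsto_simps one_ereal_def by real_asymp
  note R = interval_integral_FTC_nonneg[of 1 \<infinity> ?F, OF _ D C N A B]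
  show "set_integrable lborel (einterval 1 \<infinity>) (\<lambda>t. - ln ((t^2-1)/t^2))" using R by simp
  show "(LBINT t=1..\<infinity>. - ln ((t^2-1)/t^2)) = 2 * ln 2" using R by simp
qed


lemma sq_lt1: "0 \<le> (t::real) \<Longrightarrow> t < 1 \<Longrightarrow> t^2 < 1"
  using mult_strict_mono[of t 1 t 1] by (simp add: power2_eq_square)

definition G0 :: "real \<Rightarrow> real" where
  "G0 t = t * ln ((1-t^2)/t^2) + ln ((1+t)/(1-t))"

lemma G0_deriv:
  assumes "0 < t" "t < 1"
  shows "DERIV G0 t :> ln ((1-t^2)/t^2)"
proof -
  have t2: "1 - t^2 > 0" using sq_lt1[of t] assms by simp
  have e: "G0 = (\<lambda>t. t * ln ((1-t^2)/t^2) + ln ((1+t)/(1-t)))" by (rule ext) (simp add: G0_def)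
  show ?thesis unfolding e
      using assms t2 apply (auto intro!: derivative_eq_intros simp: power2_eq_square)
      apply (subgoal_tac "t - 1 \<noteq> 0" "t + 1 \<noteq> 0" "1 - t*t \<noteq> 0")
      apply (simp add: divide_simps)
      apply (simp add: algebra_simps)
      apply auto
      done
qed

lemma G0_cont:
  assumes "0 < t" "t < 1"
  shows "isCont G0 t"
  using G0_deriv[OF assms] DERIV_isCont by blast

lemma f_cont01:
  fixes t :: real
  assumes "0 < t" "t < 1"
  shows "isCont (\<lambda>t. ln ((1-t^2)/t^2)) t"
proof -
  have t2: "1 - t^2 > 0" using sq_lt1[of t] assms by simp
  have "(1-t^2)/t^2 > 0" using t2 assms by (auto intro!: divide_pos_pos)
  then show ?thesis using assms by (intro continuous_intros) auto
qed

definition cc :: real where "cc = sqrt (1/2)"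

lemma cc_props: "0 < cc" "cc < 1" "cc^2 = 1/2"
  unfolding cc_def by (auto simp: real_sqrt_less_iff)

lemma f_sign01:
  fixes t :: real
  assumes "0 < t" "t < 1"
  shows "t \<le> cc \<Longrightarrow> 0 \<le> ln ((1-t^2)/t^2)" and "cc \<le> t \<Longrightarrow> ln ((1-t^2)/t^2) \<le> 0"
proof -
  have t2: "1 - t^2 > 0" using sq_lt1[of t] assms by simp
  have p: "(1-t^2)/t^2 > 0" using t2 assms by (auto intro!: divide_pos_pos)
  have tp: "t^2 > 0" using assms by simp
  show "t \<le> cc \<Longrightarrow> 0 \<le> ln ((1-t^2)/t^2)"
  proof -
    assume "t \<le> cc"
    then have "t^2 \<le> cc^2" using assms by (intro power_mono) auto
    then have "t^2 \<le> 1/2" using cc_props by simp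
    then have "1 \<le> (1-t^2)/t^2" using tp by (simp add: le_divide_eq)
    then show ?thesis using p by simp
  qed
  show "cc \<le> t \<Longrightarrow> ln ((1-t^2)/t^2) \<le> 0"
  proof -
    assume "cc \<le> t"
    then have "cc^2 \<le> t^2" using cc_props by (intro power_mono) auto
    then have "1/2 \<le> t^2" using cc_props by simp
    then have "(1-t^2)/t^2 \<le> 1" using tp by (simp add: divide_le_eq)
    then show ?thesis using p by simp
  qed
qed

lemma piece1:
  shows "set_integrable lborel (einterval 0 cc) (\<lambda>t. ln ((1-t^2)/t^2))"
    and "(LBINT t=0..cc. ln ((1-t^2)/t^2)) = G0 cc"
proof -
  have D: "DERIV G0 t :> ln ((1-t^2)/t^2)" if "0 < ereal t" "ereal t < ereal cc" for t
    using that cc_props by (intro G0_deriv) auto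
  have C: "isCont (\<lambda>t. ln ((1-t^2)/t^2)) t" if "0 < ereal t" "ereal t < ereal cc" for t
    using that cc_props by (intro f_cont01) auto
  have N: "AE t in lborel. 0 < ereal t \<longrightarrow> ereal t < ereal cc \<longrightarrow> 0 \<le> ln ((1-t^2)/t^2)"
    using cc_props by (intro AE_I2 impI f_sign01(1)) auto
  have e: "G0 = (\<lambda>t. t * ln ((1-t^2)/t^2) + ln ((1+t)/(1-t)))" by (rule ext) (simp add: G0_def)
  have A: "((G0 \<circ> real_of_ereal) \<longlongrightarrow> 0) (at_right 0)"
    unfolding ereal_tendsto_simps zero_ereal_def e by real_asymp
  have B: "((G0 \<circ> real_of_ereal) \<longlongrightarrow> G0 cc) (at_left (ereal cc))"
    unfolding ereal_tendsto_simps
    using G0_cont[OF cc_props(1,2)] unfolding isCont_def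
    by (simp add: filterlim_at_split)
  note R = interval_integral_FTC_nonneg[of 0 "ereal cc" G0, OF _ D C N A B]
  show "set_integrable lborel (einterval 0 cc) (\<lambda>t. ln ((1-t^2)/t^2))" using R cc_props by simp
  show "(LBINT t=0..cc. ln ((1-t^2)/t^2)) = G0 cc" using R cc_props by simp
qed

lemma piece2:
  shows "set_integrable lborel (einterval cc 1) (\<lambda>t. - ln ((1-t^2)/t^2))"
    and "(LBINT t=cc..1. - ln ((1-t^2)/t^2)) = G0 cc - 2 * ln 2"
proof -
  have D: "DERIV (\<lambda>t. - G0 t) t :> - ln ((1-t^2)/t^2)" if "ereal cc < ereal t" "ereal t < 1" for t
    using that cc_props by (intro derivative_intros G0_deriv) auto
  have C: "isCont (\<lambda>t. - ln ((1-t^2)/t^2)) t" if "ereal cc < ereal t" "ereal t < 1" for t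
    using that cc_props by (intro continuous_intros f_cont01) auto
  have N: "AE t in lborel. ereal cc < ereal t \<longrightarrow> ereal t < 1 \<longrightarrow> 0 \<le> - ln ((1-t^2)/t^2)"
    using cc_props by (intro AE_I2 impI) (auto intro!: f_sign01(2))
  have e: "G0 = (\<lambda>t. t * ln ((1-t^2)/t^2) + ln ((1+t)/(1-t)))" by (rule ext) (simp add: G0_def)
  have B: "(((\<lambda>t. - G0 t) \<circ> real_of_ereal) \<longlongrightarrow> - (2 * ln 2)) (at_left 1)"
    unfolding ereal_tendsto_simps one_ereal_def e by real_asymp
  have A: "(((\<lambda>t. - G0 t) \<circ> real_of_ereal) \<longlongrightarrow> - G0 cc) (at_right (ereal cc))"
    unfolding ereal_tendsto_simps
    using G0_cont[OF cc_props(1,2)] unfolding isCont_def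
    by (intro tendsto_minus) (simp add: filterlim_at_split)
  note R = interval_integral_FTC_nonneg[of "ereal cc" 1 "\<lambda>t. - G0 t", OF _ D C N A B]
  show "set_integrable lborel (einterval cc 1) (\<lambda>t. - ln ((1-t^2)/t^2))" using R cc_props by simp
  show "(LBINT t=cc..1. - ln ((1-t^2)/t^2)) = G0 cc - 2 * ln 2" using R cc_props by simp
qed



definition fx :: "real \<Rightarrow> real \<Rightarrow> real" where
  "fx x y = ln \<bar>(x^2 - y^2)/y^2\<bar>"

lemma einterval_sets: "einterval 0 (ereal cc) = {0<..<cc}" "einterval (ereal cc) 1 = {cc<..<1}"
  "einterval 1 \<infinity> = {1<..}"
  by (auto simp: einterval_def one_ereal_def zero_ereal_def)

lemma core:
  shows "set_integrable lborel {0<..} (fx 1)" and "(LINT t:{0<..}|lborel. fx 1 t) = 0"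
proof -
  let ?A = "{0<..<cc}" and ?B = "{cc<..<(1::real)}" and ?C = "{(1::real)<..}"
  have fA: "fx 1 t = ln ((1-t^2)/t^2)" if "t \<in> ?A" for t
  proof -
    have "0 < t" "t < 1" using that cc_props by auto
    then have "1 - t^2 > 0" "t^2 > 0" using sq_lt1[of t] by auto
    then show ?thesis by (simp add: fx_def)
  qed
  have fB: "fx 1 t = - (- ln ((1-t^2)/t^2))" if "t \<in> ?B" for t
  proof -
    have "0 < t" "t < 1" using that cc_props by auto
    then have "1 - t^2 > 0" "t^2 > 0" using sq_lt1[of t] by auto
    then show ?thesis by (simp add: fx_def)
  qed
  have fC: "fx 1 t = - (- ln ((t^2-1)/t^2))" if "t \<in> ?C" for t
  proof -
    have "1 < t" using that by auto
    then have "t^2 > 1" by (simp add: one_less_power)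
    then have n: "(1 - t^2)/t^2 < 0" by (intro divide_neg_pos) auto
    have e: "\<bar>(1 - t^2)/t^2\<bar> = (t^2-1)/t^2" unfolding abs_of_neg[OF n] by (simp add: minus_divide_left)
    show ?thesis unfolding fx_def power_one e by simp
  qed
  have iA: "set_integrable lborel ?A (fx 1)"
    using piece1(1) unfolding einterval_sets by (subst set_integrable_cong[OF refl refl fA]) auto
  have iB: "set_integrable lborel ?B (fx 1)"
    using set_integrable_mult_right[OF piece2(1), of "-1"] unfolding einterval_sets
    by (subst set_integrable_cong[OF refl refl fB]) auto
  have iC: "set_integrable lborel ?C (fx 1)"
    using set_integrable_mult_right[OF piece3(1), of "-1"] unfolding einterval_sets
    by (subst set_integrable_cong[OF refl refl fC]) auto
  have cc0: "0 \<le> ereal cc" "ereal cc \<le> 1" using cc_props by auto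
  have vA: "(LINT t:?A|lborel. fx 1 t) = G0 cc"
  proof -
    have "(LINT t:?A|lborel. fx 1 t) = (LINT t:?A|lborel. ln((1-t^2)/t^2))"
      by (rule set_lebesgue_integral_cong) (auto simp: fA)
    also have "\<dots> = G0 cc" using piece1(2) cc0
      by (simp add: interval_lebesgue_integral_def einterval_sets)
    finally show ?thesis .
  qed
  have vB: "(LINT t:?B|lborel. fx 1 t) = 2 * ln 2 - G0 cc"
  proof -
    have "(LINT t:?B|lborel. fx 1 t) = (LINT t:?B|lborel. - (- ln((1-t^2)/t^2)))"
      by (rule set_lebesgue_integral_cong) (auto simp: fB)
    also have "\<dots> = - (LINT t:?B|lborel. (- ln((1-t^2)/t^2)))"
      by (rule set_integral_uminus) (use piece2(1) in \<open>simp add: einterval_sets\<close>)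
    also have "\<dots> = 2 * ln 2 - G0 cc" using piece2(2) cc0
      by (simp add: interval_lebesgue_integral_def einterval_sets)
    finally show ?thesis .
  qed
  have vC: "(LINT t:?C|lborel. fx 1 t) = - (2 * ln 2)"
  proof -
    have "(LINT t:?C|lborel. fx 1 t) = (LINT t:?C|lborel. - (- ln((t^2-1)/t^2)))"
      by (rule set_lebesgue_integral_cong) (auto simp: fC)
    also have "\<dots> = - (LINT t:?C|lborel. (- ln((t^2-1)/t^2)))"
      by (rule set_integral_uminus) (use piece3(1) in \<open>simp add: einterval_sets\<close>)
    also have "\<dots> = - (2 * ln 2)" using piece3(2)
      by (simp add: interval_lebesgue_integral_def einterval_sets)
    finally show ?thesis .
  qed
  have dif: "({0<..} - (?A \<union> ?B \<union> ?C)) \<union> ((?A \<union> ?B \<union> ?C) - {0<..}) \<subseteq> {cc, 1}"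
    using cc_props by auto
  have iABC: "set_integrable lborel (?A \<union> ?B \<union> ?C) (fx 1)"
    by (intro set_integrable_Un iA iB iC) auto
  show "set_integrable lborel {0<..} (fx 1)"
    using iABC set_integrable_discrete_difference[of "{cc,1}" "{0<..}" "?A \<union> ?B \<union> ?C" lborel "fx 1", OF _ dif]
    by auto
  have "(LINT t:{0<..}|lborel. fx 1 t) = (LINT t:(?A \<union> ?B \<union> ?C)|lborel. fx 1 t)"
    using set_integral_discrete_difference[of "{cc,1}" "{0<..}" "?A \<union> ?B \<union> ?C" lborel "fx 1", OF _ dif]
    by auto
  also have "\<dots> = (LINT t:?A|lborel. fx 1 t) + (LINT t:?B|lborel. fx 1 t) + (LINT t:?C|lborel. fx 1 t)"
    using cc_props
    by (subst set_integral_Un, force, intro set_integrable_Un iA iB, auto intro: iC,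
        subst set_integral_Un, auto intro: iA iB)
  also have "\<dots> = 0" using vA vB vC by simp
  finally show "(LINT t:{0<..}|lborel. fx 1 t) = 0" .
qed


lemma lip_from_deriv:
  fixes \<phi> \<phi>' :: "real \<Rightarrow> real"
  assumes "s \<le> t" "continuous_on {s..t} \<phi>"
    "\<And>x. s < x \<Longrightarrow> x < t \<Longrightarrow> DERIV \<phi> x :> \<phi>' x"
    "\<And>x. s < x \<Longrightarrow> x < t \<Longrightarrow> \<bar>\<phi>' x\<bar> \<le> 1"
  shows "\<bar>\<phi> t - \<phi> s\<bar> \<le> t - s"
proof (cases "s = t")
  case True then show ?thesis by simp
next
  case False
  then have st: "s < t" using assms(1) by simp
  obtain l z where z: "s < z" "z < t" "DERIV \<phi> z :> l" "\<phi> t - \<phi> s = (t - s) * l"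
    using MVT[OF st assms(2)] assms(3) real_differentiable_def by blast
  have "l = \<phi>' z" using DERIV_unique[OF z(3) assms(3)[OF z(1,2)]] .
  then have "\<bar>l\<bar> \<le> 1" using assms(4)[OF z(1,2)] by simp
  then have "\<bar>(t - s) * l\<bar> \<le> (t - s) * 1" using st by (simp add: abs_mult mult_left_mono)
  then show ?thesis using z(4) by simp
qed

definition ga :: "real \<Rightarrow> real \<Rightarrow> real" where
  "ga a t = (if a = 0 then exp (- t) else (max 0 (1 - a * t)) powr (1/a))"

lemma Ra_ga: "Ra a \<omega> x = ga a (Top \<omega> x / rfun \<omega>)"
  unfolding Ra_def ga_def by simp

lemma ga_bounds:
  assumes "a < 1" "0 \<le> t"
  shows "0 \<le> ga a t" "ga a t \<le> 1"
proof -
  show "0 \<le> ga a t" unfolding ga_def by simp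
  show "ga a t \<le> 1"
  proof (cases "a = 0")
    case True then show ?thesis using assms by (simp add: ga_def)
  next
    case False
    show ?thesis
    proof (cases "a < 0")
      case True
      have b: "1 \<le> 1 - a * t" using True assms by (simp add: mult_nonpos_nonneg)
      have "1 \<le> (1 - a * t) powr (- (1/a))" using True b by (intro ge_one_powr_ge_zero) auto
      then have "(1 - a * t) powr (1/a) \<le> 1" using b
        by (simp add: powr_minus divide_simps split: if_splits)
      then show ?thesis using b False by (simp add: ga_def max_def)
    next
      case False2: False
      have "a > 0" using False False2 by simp
      then have "\<bar>max 0 (1 - a * t)\<bar> \<le> 1" using assms by auto
      then show ?thesis using False \<open>a > 0\<close> by (simp add: ga_def powr_le1)
    qed
  qed
qed

lemma ga_lip_le:
  assumes "a < 1" "0 \<le> s" "s \<le> t"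
  shows "\<bar>ga a t - ga a s\<bar> \<le> t - s"
proof (cases "a = 0")
  case True
  have "\<bar>(\<lambda>x. exp (-x)) t - (\<lambda>x. exp (-x)) s\<bar> \<le> t - s"
  proof (rule lip_from_deriv[where \<phi>' = "\<lambda>x. - exp (-x)"])
    show "continuous_on {s..t} (\<lambda>x. exp (- x))" by (intro continuous_intros)
    show "DERIV (\<lambda>x. exp (- x)) x :> - exp (- x)" for x by (auto intro!: derivative_eq_intros)
    show "\<bar>- exp (- x)\<bar> \<le> 1" if "s < x" for x using that assms by simp
  qed (use assms in auto)
  then show ?thesis using True by (simp add: ga_def)
next
  case False
  show ?thesis
  proof (cases "a < 0")
    case True
    let ?\<phi> = "\<lambda>x. (1 - a * x) powr (1/a)"
    have pos: "1 \<le> 1 - a * x" if "0 \<le> x" for x using True that by (simp add: mult_nonpos_nonneg)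
    have "\<bar>?\<phi> t - ?\<phi> s\<bar> \<le> t - s"
    proof (rule lip_from_deriv[where \<phi>' = "\<lambda>x. - ((1 - a * x) powr (1/a - 1))"])
      show "continuous_on {s..t} ?\<phi>"
        using pos assms by (intro continuous_intros) (auto, smt (verit) pos)
      show "DERIV ?\<phi> x :> - ((1 - a * x) powr (1/a - 1))" if "s < x" "x < t" for x
      proof -
        have p: "0 < 1 - a * x" using pos[of x] that assms by simp
        show ?thesis using p False
          by (auto intro!: derivative_eq_intros)
      qed
      show "\<bar>- ((1 - a * x) powr (1/a - 1))\<bar> \<le> 1" if "s < x" "x < t" for x
      proof -
        have b: "1 \<le> 1 - a * x" using pos[of x] that assms by simp
        have "1 \<le> (1 - a * x) powr (- (1/a - 1))" using True b by (intro ge_one_powr_ge_zero) (auto simp: field_simps)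
        then have "(1 - a * x) powr (1/a - 1) \<le> 1" using b
          by (simp add: powr_minus divide_simps split: if_splits)
        then show ?thesis by simp
      qed
    qed (use assms in auto)
    then show ?thesis using pos[of s] pos[of t] assms False by (simp add: ga_def max_def)
  next
    case False2: False
    have ap: "a > 0" using False False2 by simp
    show ?thesis
    proof (cases "1/a \<le> s")
      case True
      have "a * s \<le> a * t" using assms ap by (intro mult_left_mono) auto
      moreover have h1: "1 \<le> a * s" using True ap by (simp add: field_simps)
      ultimately have h2: "1 \<le> a * t" by linarith
      have "max 0 (1 - a * s) = 0" "max 0 (1 - a * t) = 0"
        using h1 h2 by auto
      then show ?thesis using assms False by (simp add: ga_def)
    next
      case sl: False
      define t' where "t' = min t (1/a)"
      let ?\<phi> = "\<lambda>x. (1 - a * x) powr (1/a)"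
      have nn: "0 \<le> 1 - a * x" if "x \<le> 1/a" for x using that ap by (simp add: field_simps)
      have gt: "ga a t = ?\<phi> t'"
      proof (cases "t \<le> 1/a")
        case True then show ?thesis using nn[of t] False by (simp add: ga_def t'_def)
      next
        case f: False
        then have "max 0 (1 - a * t) = 0" using ap by (simp add: field_simps)
        then show ?thesis using f False ap by (simp add: ga_def t'_def)
      qed
      have gs: "ga a s = ?\<phi> s" using nn[of s] sl False by (simp add: ga_def)
      have st': "s \<le> t'" "t' \<le> t" "t' \<le> 1/a" using sl assms by (auto simp: t'_def)
      have "\<bar>?\<phi> t' - ?\<phi> s\<bar> \<le> t' - s"
      proof (rule lip_from_deriv[where \<phi>' = "\<lambda>x. - ((1 - a * x) powr (1/a - 1))"])
        show "continuous_on {s..t'} ?\<phi>"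
          using nn st' ap by (intro continuous_on_powr' continuous_intros) auto
        show "DERIV ?\<phi> x :> - ((1 - a * x) powr (1/a - 1))" if "s < x" "x < t'" for x
        proof -
          have "a * x < a * t'" using that ap by simp
          moreover have "a * t' \<le> 1" using st' ap by (simp add: field_simps)
          ultimately have p: "0 < 1 - a * x" by linarith
          show ?thesis using p False
            by (auto intro!: derivative_eq_intros)
        qed
        show "\<bar>- ((1 - a * x) powr (1/a - 1))\<bar> \<le> 1" if "s < x" "x < t'" for x
        proof -
          have "a * x < a * t'" using that ap by simp
          moreover have "a * t' \<le> 1" using st' ap by (simp add: field_simps)
          moreover have "0 \<le> a * x" using that ap assms by simp
          ultimately have p: "0 \<le> 1 - a * x" "1 - a * x \<le> 1" by linarith+
          have "(1 - a * x) powr (1/a - 1) \<le> 1" using p ap assms by (intro powr_le1) (auto simp: field_simps)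
          then show ?thesis by simp
        qed
      qed (use st' in auto)
      then show ?thesis using gt gs st' by simp
    qed
  qed
qed

lemma ga_lip:
  assumes "a < 1" "0 \<le> s" "0 \<le> t"
  shows "\<bar>ga a t - ga a s\<bar> \<le> \<bar>t - s\<bar>"
  using ga_lip_le[OF assms(1,2), of t] ga_lip_le[OF assms(1,3), of s] assms
  by (cases "s \<le> t") (auto simp: abs_minus_commute)



lemma eta_pos: "eta a > 0"
  unfolding eta_def by (auto intro!: divide_pos_pos mult_pos_pos)

lemma Da_props:
  assumes "\<omega> \<in> Da a"
  shows "continuous_on UNIV \<omega>" "\<omega> 0 = 1" "\<And>x. 0 \<le> \<omega> x" "\<And>x. \<omega> x \<le> 1"
    "\<And>x. 1 - x^2 \<le> \<omega> x" "\<And>x. \<omega> (-x) = \<omega> x"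
    "\<And>y z. 0 \<le> y \<Longrightarrow> y \<le> z \<Longrightarrow> \<omega> z \<le> \<omega> y"
    "\<omega> \<in> borel_measurable borel"
  using assms unfolding Da_def
  by (auto simp: monotone_on_def borel_measurable_continuous_onI)

lemma Da_half:
  assumes "\<omega> \<in> Da a"
  shows "\<omega> (1/2) < 1"
proof (rule ccontr)
  assume "\<not> \<omega> (1/2) < 1"
  then have h: "\<omega> (1/2) = 1" using Da_props(4)[OF assms, of "1/2"] by simp
  obtain d where d: "((\<lambda>t. (\<omega> t - \<omega> (1/2)) / (t - 1/2)) \<longlongrightarrow> d) (at_left (1/2))" "d \<le> - eta a"
    using assms unfolding Da_def by blast
  have ev: "eventually (\<lambda>t. (\<omega> t - \<omega> (1/2)) / (t - 1/2) = 0) (at_left (1/2::real))"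
  proof -
    have "eventually (\<lambda>t. t \<in> {0<..<1/2}) (at_left (1/2::real))"
      by (rule eventually_at_left_real) simp
    then show ?thesis
    proof eventually_elim
      case (elim t)
      have "\<omega> (1/2) \<le> \<omega> t" using Da_props(7)[OF assms, of t "1/2"] elim by simp
      then have "\<omega> t = 1" using h Da_props(4)[OF assms, of t] by simp
      then show ?case using h by simp
    qed
  qed
  have "((\<lambda>t. (\<omega> t - \<omega> (1/2)) / (t - 1/2)) \<longlongrightarrow> 0) (at_left (1/2))"
    by (rule tendsto_eventually[OF ev])
  then have "d = 0" using d(1) tendsto_unique[OF trivial_limit_at_left_real] by blast
  then show False using d(2) eta_pos[of a] by simp
qed



lemma fx_meas[measurable]: "fx x \<in> borel_measurable borel"
  unfolding fx_def by measurable

lemma fx_meas_l[measurable]: "fx x \<in> borel_measurable lborel"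
  by simp

lemma fx0: "fx 0 y = 0"
  unfolding fx_def by (cases "y = 0") auto

lemma fx_scale:
  assumes "x \<noteq> 0" "t \<noteq> 0"
  shows "fx x (\<bar>x\<bar> * t) = fx 1 t"
proof -
  have "(x^2 - (\<bar>x\<bar> * t)^2) / (\<bar>x\<bar> * t)^2 = (1 - t^2)/t^2"
    using assms by (simp add: power_mult_distrib field_simps)
  then show ?thesis unfolding fx_def by simp
qed

lemma set_meas: "g \<in> borel_measurable lborel \<Longrightarrow> set_borel_measurable lborel {0<..} g"
  for g :: "real \<Rightarrow> real"
  unfolding set_borel_measurable_def by (intro borel_measurable_scaleR) auto

lemma scale_integral:
  fixes h :: "real \<Rightarrow> real" and x :: real
  assumes "x \<noteq> 0"
  shows "(LINT y:{0<..}|lborel. h y) = \<bar>x\<bar> * (LINT t:{0<..}|lborel. h (\<bar>x\<bar> * t))"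
    and "set_integrable lborel {0<..} h \<longleftrightarrow> set_integrable lborel {0<..} (\<lambda>t. h (\<bar>x\<bar> * t))"
proof -
  have c: "\<bar>x\<bar> \<noteq> 0" using assms by simp
  have ind: "indicator {0<..} (\<bar>x\<bar> * t) = (indicator {0<..} t :: real)" for t
    using assms by (auto simp: indicator_def zero_less_mult_iff)
  show "(LINT y:{0<..}|lborel. h y) = \<bar>x\<bar> * (LINT t:{0<..}|lborel. h (\<bar>x\<bar> * t))"
    unfolding set_lebesgue_integral_def
    using lborel_integral_real_affine[OF c, of "\<lambda>y. indicator {0<..} y *\<^sub>R h y" 0]
    by (simp add: ind)
  show "set_integrable lborel {0<..} h \<longleftrightarrow> set_integrable lborel {0<..} (\<lambda>t. h (\<bar>x\<bar> * t))"
    unfolding set_integrable_def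
    using lborel_integrable_real_affine_iff[OF c, of "\<lambda>y. indicator {0<..} y *\<^sub>R h y" 0]
    by (simp add: ind)
qed

lemma fx1_sign:
  assumes "0 < t"
  shows "t \<le> cc \<Longrightarrow> 0 \<le> fx 1 t" and "cc \<le> t \<Longrightarrow> fx 1 t \<le> 0"
proof -
  show "t \<le> cc \<Longrightarrow> 0 \<le> fx 1 t"
  proof -
    assume a: "t \<le> cc"
    then have "t < 1" using cc_props by simp
    then have "1 - t^2 > 0" "t^2 > 0" using sq_lt1[of t] assms by auto
    then have "fx 1 t = ln ((1-t^2)/t^2)" by (simp add: fx_def)
    then show ?thesis using f_sign01(1)[OF assms \<open>t < 1\<close> a] by simp
  qed
  show "cc \<le> t \<Longrightarrow> fx 1 t \<le> 0"
  proof -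
    assume a: "cc \<le> t"
    consider "t < 1" | "t = 1" | "t > 1" by linarith
    then show ?thesis
    proof cases
      case 1
      then have "1 - t^2 > 0" "t^2 > 0" using sq_lt1[of t] assms by auto
      then have "fx 1 t = ln ((1-t^2)/t^2)" by (simp add: fx_def)
      then show ?thesis using f_sign01(2)[OF assms \<open>t < 1\<close> a] by simp
    next
      case 2 then show ?thesis by (simp add: fx_def)
    next
      case 3
      then have h: "t^2 > 1" by (simp add: one_less_power)
      have "(1 - t^2)/t^2 < 0" using h by (intro divide_neg_pos) auto
      then have p: "0 < \<bar>(1 - t^2)/t^2\<bar>" by (simp only: zero_less_abs_iff)
      have tp: "t^2 > 0" using \<open>t > 1\<close> by simp
      have "-1 \<le> (1 - t^2)/t^2" using tp by (simp add: le_divide_eq)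
      then have q: "\<bar>(1 - t^2)/t^2\<bar> \<le> 1" using \<open>(1 - t^2)/t^2 < 0\<close> by (simp add: abs_le_iff)
      show ?thesis using ln_le_zero_iff[OF p] q by (simp add: fx_def)
    qed
  qed
qed

lemma fx_sign:
  assumes "x \<noteq> 0" "0 < y"
  shows "y \<le> \<bar>x\<bar> * cc \<Longrightarrow> 0 \<le> fx x y" and "\<bar>x\<bar> * cc \<le> y \<Longrightarrow> fx x y \<le> 0"
proof -
  have e: "fx x y = fx 1 (y / \<bar>x\<bar>)"
    using fx_scale[OF assms(1), of "y / \<bar>x\<bar>"] assms by simp
  have p: "0 < y / \<bar>x\<bar>" using assms by simp
  show "y \<le> \<bar>x\<bar> * cc \<Longrightarrow> 0 \<le> fx x y"
    unfolding e using assms by (intro fx1_sign(1)[OF p]) (simp add: divide_le_eq mult.commute)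
  show "\<bar>x\<bar> * cc \<le> y \<Longrightarrow> fx x y \<le> 0"
    unfolding e using assms by (intro fx1_sign(2)[OF p]) (simp add: le_divide_eq mult.commute)
qed

lemma fx_int:
  shows "set_integrable lborel {0<..} (fx x)" and "(LINT y:{0<..}|lborel. fx x y) = 0"
proof -
  have ae: "(\<lambda>t. fx x (\<bar>x\<bar> * t)) = (\<lambda>t. if t = 0 then fx x 0 else fx 1 t)" if "x \<noteq> 0"
    using fx_scale[OF that] by auto
  have si1: "set_integrable lborel {0<..} (\<lambda>t. fx x (\<bar>x\<bar> * t))" if "x \<noteq> 0"
    using core(1) by (subst set_integrable_cong[OF refl refl, of _ _ "fx 1"]) (auto simp: fx_scale that)
  have v1: "(LINT t:{0<..}|lborel. fx x (\<bar>x\<bar> * t)) = 0" if "x \<noteq> 0"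
    using core(2) by (subst set_lebesgue_integral_cong[of _ _ _ "fx 1"]) (auto simp: fx_scale that)
  show "set_integrable lborel {0<..} (fx x)"
  proof (cases "x = 0")
    case True then show ?thesis by (simp add: fx0[abs_def] set_integrable_def)
  next
    case False then show ?thesis using scale_integral(2)[OF False, of "fx x"] si1 by simp
  qed
  show "(LINT y:{0<..}|lborel. fx x y) = 0"
  proof (cases "x = 0")
    case True then show ?thesis by (simp add: fx0)
  next
    case False then show ?thesis using scale_integral(1)[OF False, of "fx x"] v1 by simp
  qed
qed

definition KK :: real where "KK = (LINT t:{0<..}|lborel. \<bar>fx 1 t\<bar>)"

lemma fx_abs:
  shows "set_integrable lborel {0<..} (\<lambda>y. \<bar>fx x y\<bar>)"
    and "(LINT y:{0<..}|lborel. \<bar>fx x y\<bar>) = \<bar>x\<bar> * KK"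
proof -
  show "set_integrable lborel {0<..} (\<lambda>y. \<bar>fx x y\<bar>)" using fx_int(1) by (rule set_integrable_abs)
  show "(LINT y:{0<..}|lborel. \<bar>fx x y\<bar>) = \<bar>x\<bar> * KK"
  proof (cases "x = 0")
    case True then show ?thesis by (simp add: fx0)
  next
    case False
    have "(LINT t:{0<..}|lborel. \<bar>fx x (\<bar>x\<bar> * t)\<bar>) = KK"
      unfolding KK_def by (rule set_lebesgue_integral_cong) (auto simp: fx_scale False)
    then show ?thesis using scale_integral(1)[OF False, of "\<lambda>y. \<bar>fx x y\<bar>"] by simp
  qed
qed

lemma KK_nonneg: "0 \<le> KK"
  unfolding KK_def set_lebesgue_integral_def by (intro integral_nonneg_AE) auto



lemma set_abs_bound:
  fixes f g :: "real \<Rightarrow> real"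
  assumes "set_integrable lborel A f" "set_integrable lborel A g" "\<And>x. x \<in> A \<Longrightarrow> \<bar>f x\<bar> \<le> g x"
  shows "\<bar>LINT x:A|lborel. f x\<bar> \<le> (LINT x:A|lborel. g x)"
  using assms unfolding set_integrable_def set_lebesgue_integral_def
  by (intro integral_abs_bound_integral) (auto simp: indicator_def)

lemma T_int:
  assumes "\<omega> \<in> Da a"
  shows "set_integrable lborel {0<..} (\<lambda>y. fx x y * \<omega> y)"
proof (rule set_integrable_bound[OF fx_int(1)])
  note [measurable] = Da_props(8)[OF assms]
  show "set_borel_measurable lborel {0<..} (\<lambda>y. fx x y * \<omega> y)"
    by (intro set_meas) measurable
  show "AE y in lborel. y \<in> {0<..} \<longrightarrow> norm (fx x y * \<omega> y) \<le> norm (fx x y)"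
    using Da_props(3,4)[OF assms] by (intro AE_I2) (auto simp: abs_mult intro!: mult_left_le)
qed

lemma Top_eq: "Top \<omega> x = (1/pi) * (LINT y:{0<..}|lborel. fx x y * \<omega> y)"
  by (simp add: Top_def fx_def)

lemma Top_nonneg:
  assumes "\<omega> \<in> Da a"
  shows "0 \<le> Top \<omega> x"
proof (cases "x = 0")
  case True then show ?thesis by (simp add: Top_eq fx0)
next
  case False
  define c where "c = \<bar>x\<bar> * cc"
  have c0: "0 \<le> c" using cc_props by (simp add: c_def)
  have "(LINT y:{0<..}|lborel. fx x y * \<omega> c) \<le> (LINT y:{0<..}|lborel. fx x y * \<omega> y)"
  proof (rule set_integral_mono)
    show "set_integrable lborel {0<..} (\<lambda>y. fx x y * \<omega> c)"
      using fx_int(1) by (rule set_integrable_mult_left)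
    show "set_integrable lborel {0<..} (\<lambda>y. fx x y * \<omega> y)" by (rule T_int[OF assms])
    fix y :: real assume y: "y \<in> {0<..}"
    show "fx x y * \<omega> c \<le> fx x y * \<omega> y"
    proof (cases "y \<le> c")
      case True
      then have "0 \<le> fx x y" using fx_sign(1)[OF False] y by (simp add: c_def)
      moreover have "\<omega> c \<le> \<omega> y" using Da_props(7)[OF assms, of y c] True y by simp
      ultimately show ?thesis by (simp add: mult_left_mono)
    next
      case f: False
      then have "fx x y \<le> 0" using fx_sign(2)[OF False] y by (simp add: c_def)
      moreover have "\<omega> y \<le> \<omega> c" using Da_props(7)[OF assms, of c y] f c0 by simp
      ultimately show ?thesis by (simp add: mult_left_mono_neg)
    qed
  qed
  moreover have "(LINT y:{0<..}|lborel. fx x y * \<omega> c) = 0"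
    using fx_int(2)[of x] by simp
  ultimately have "0 \<le> (LINT y:{0<..}|lborel. fx x y * \<omega> y)" by linarith
  then show ?thesis by (simp add: Top_eq)
qed

lemma Top_le:
  assumes "\<omega> \<in> Da a"
  shows "Top \<omega> x \<le> \<bar>x\<bar> * KK / pi"
proof -
  have "\<bar>LINT y:{0<..}|lborel. fx x y * \<omega> y\<bar> \<le> (LINT y:{0<..}|lborel. \<bar>fx x y\<bar>)"
    using T_int[OF assms] fx_abs(1) Da_props(3,4)[OF assms]
    by (intro set_abs_bound) (auto simp: abs_mult intro!: mult_left_le)
  then show ?thesis using fx_abs(2)[of x] by (simp add: Top_eq divide_simps)
qed

lemma Top_diff:
  assumes "\<omega> \<in> Da a" "\<omega>' \<in> Da a"
  shows "\<bar>Top \<omega>' x - Top \<omega> x\<bar> \<le> (1/pi) * (LINT y:{0<..}|lborel. \<bar>fx x y\<bar> * \<bar>\<omega>' y - \<omega> y\<bar>)"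
proof -
  note [measurable] = Da_props(8)[OF assms(1)] Da_props(8)[OF assms(2)]
  have i: "set_integrable lborel {0<..} (\<lambda>y. fx x y * \<omega>' y - fx x y * \<omega> y)"
    using T_int[OF assms(1)] T_int[OF assms(2)] unfolding set_integrable_def
    by (simp add: right_diff_distrib)
  have i2: "set_integrable lborel {0<..} (\<lambda>y. \<bar>fx x y\<bar> * \<bar>\<omega>' y - \<omega> y\<bar>)"
    using set_integrable_abs[OF i] by (simp add: abs_mult right_diff_distrib[symmetric])
  have "Top \<omega>' x - Top \<omega> x = (1/pi) * (LINT y:{0<..}|lborel. fx x y * \<omega>' y - fx x y * \<omega> y)"
    using T_int[OF assms(1)] T_int[OF assms(2)] by (simp add: Top_eq set_integral_diff right_diff_distrib)
  moreover have "\<bar>LINT y:{0<..}|lborel. fx x y * \<omega>' y - fx x y * \<omega> y\<bar>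
      \<le> (LINT y:{0<..}|lborel. \<bar>fx x y\<bar> * \<bar>\<omega>' y - \<omega> y\<bar>)"
    using i i2 by (intro set_abs_bound) (auto simp: abs_mult right_diff_distrib[symmetric])
  ultimately show ?thesis by (simp add: abs_mult divide_simps)
qed

lemma w0_int: "set_integrable lborel {0<..} (\<lambda>y::real. 2 * inverse (1 + y^2))"
proof -
  have "set_integrable lborel UNIV (\<lambda>y::real. inverse (1 + y^2))"
    using integrable_inverse_1_plus_square by simp
  then have "set_integrable lborel {0<..} (\<lambda>y::real. inverse (1 + y^2))"
    by (rule set_integrable_subset) auto
  then show ?thesis by (rule set_integrable_mult_right)
qed

lemma r_bound:
  fixes d y :: real
  assumes "0 \<le> d" "d \<le> 1" "d \<le> y^2" "0 < y"
  shows "d / y^2 \<le> 2 * inverse (1 + y^2)"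
proof -
  have "d * y^2 \<le> 1 * y^2" using assms by (intro mult_right_mono) auto
  moreover have "d * (1 + y^2) = d + d * y^2" by (simp add: algebra_simps)
  ultimately have "d * (1 + y^2) \<le> 2 * y^2" using assms by linarith
  then show ?thesis using assms by (simp add: divide_simps field_simps)
qed

lemma rfun_eq:
  assumes "\<omega> \<in> Da a"
  shows "rfun \<omega> = (1/pi) * (LINT y:{0<..}|lborel. (1 - \<omega> y) / y^2)"
  using Da_props(2)[OF assms] by (simp add: rfun_def)

lemma r_int:
  assumes "\<omega> \<in> Da a"
  shows "set_integrable lborel {0<..} (\<lambda>y. (1 - \<omega> y) / y^2)"
proof (rule set_integrable_bound[OF w0_int])
  note [measurable] = Da_props(8)[OF assms]
  show "set_borel_measurable lborel {0<..} (\<lambda>y. (1 - \<omega> y) / y^2)"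
    by (intro set_meas) measurable
  show "AE y in lborel. y \<in> {0<..} \<longrightarrow> norm ((1 - \<omega> y) / y^2) \<le> norm (2 * inverse (1 + y^2))"
  proof (intro AE_I2 impI)
    fix y :: real assume y: "y \<in> {0<..}"
    have "(1 - \<omega> y) / y^2 \<le> 2 * inverse (1 + y^2)"
      using Da_props(3,4,5)[OF assms, of y] y by (intro r_bound) auto
    moreover have "0 \<le> (1 - \<omega> y) / y^2" using Da_props(4)[OF assms, of y] by simp
    moreover have "0 \<le> 2 * inverse (1 + y^2)" by (simp add: add_pos_nonneg)
    ultimately show "norm ((1 - \<omega> y) / y^2) \<le> norm (2 * inverse (1 + y^2))" by simp
  qed
qed

lemma r_pos:
  assumes "\<omega> \<in> Da a"
  shows "0 < rfun \<omega>"
proof -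
  define q where "q = 1 - \<omega> (1/2)"
  have q: "0 < q" using Da_half[OF assms] by (simp add: q_def)
  have ii: "set_integrable lborel {0<..} (\<lambda>y::real. q/4 * indicator {1..2} y)"
  proof -
    have "integrable lborel (\<lambda>y::real. indicator {1..2::real} y :: real)" by (simp add: integrable_indicator_iff)
    then have i1: "integrable lborel (\<lambda>y::real. q/4 * (indicator {1..2::real} y :: real))" by simp
    have e1: "(\<lambda>y::real. q/4 * (indicator {1..2::real} y :: real)) = (\<lambda>y. indicator {0<..} y *\<^sub>R (q/4 * indicator {1..2} y))"
      by (auto simp: indicator_def)
    show ?thesis unfolding set_integrable_def using i1 unfolding e1 .
  qed
  have "(LINT y::real:{0<..}|lborel. q/4 * indicator {1..2} y) \<le> (LINT y:{0<..}|lborel. (1 - \<omega> y) / y^2)"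
  proof (rule set_integral_mono[OF ii r_int[OF assms]])
    fix y :: real assume y: "y \<in> {0<..}"
    show "q/4 * indicator {1..2} y \<le> (1 - \<omega> y) / y^2"
    proof (cases "y \<in> {1..2}")
      case True
      have "\<omega> y \<le> \<omega> (1/2)" using Da_props(7)[OF assms, of "1/2" y] True by simp
      then have a1: "q \<le> 1 - \<omega> y" by (simp add: q_def)
      have "y^2 \<le> 2^2" using True by (intro power_mono) auto
      then have a2: "q/4 * y^2 \<le> q/4 * 4" using q by (intro mult_left_mono) auto
      have "0 < y^2" using y by simp
      then have "q/4 \<le> (1 - \<omega> y) / y^2" using a1 a2 by (simp add: le_divide_eq)
      then show ?thesis using True by simp
    next
      case False
      then show ?thesis using Da_props(4)[OF assms, of y] by simp
    qed
  qed
  moreover have "(LINT y::real:{0<..}|lborel. q/4 * indicator {1..2} y) = q / 4"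
  proof -
    have "(LINT y::real:{0<..}|lborel. q/4 * indicator {1..2} y) = (LBINT y. q/4 * indicator {1..2::real} y)"
      unfolding set_lebesgue_integral_def by (intro Bochner_Integration.integral_cong) (auto simp: indicator_def)
    also have "\<dots> = q / 4" by simp
    finally show ?thesis .
  qed
  ultimately have "0 < (LINT y:{0<..}|lborel. (1 - \<omega> y) / y^2)" using q by simp
  then show ?thesis by (simp add: rfun_eq[OF assms])
qed

lemma r_diff:
  assumes "\<omega> \<in> Da a" "\<omega>' \<in> Da a"
  shows "\<bar>rfun \<omega>' - rfun \<omega>\<bar> \<le> (1/pi) * (LINT y:{0<..}|lborel. \<bar>\<omega>' y - \<omega> y\<bar> / y^2)"
proof -
  have i: "set_integrable lborel {0<..} (\<lambda>y. (1 - \<omega>' y) / y^2 - (1 - \<omega> y) / y^2)"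
    using r_int[OF assms(1)] r_int[OF assms(2)] unfolding set_integrable_def
    by (simp add: right_diff_distrib)
  have i2: "set_integrable lborel {0<..} (\<lambda>y. \<bar>\<omega>' y - \<omega> y\<bar> / y^2)"
    using set_integrable_abs[OF i] by (simp add: diff_divide_distrib[symmetric] abs_minus_commute)
  have "rfun \<omega>' - rfun \<omega> = (1/pi) * (LINT y:{0<..}|lborel. (1 - \<omega>' y) / y^2 - (1 - \<omega> y) / y^2)"
    using r_int[OF assms(1)] r_int[OF assms(2)]
    by (simp add: rfun_eq[OF assms(1)] rfun_eq[OF assms(2)] set_integral_diff right_diff_distrib)
  moreover have "\<bar>LINT y:{0<..}|lborel. (1 - \<omega>' y) / y^2 - (1 - \<omega> y) / y^2\<bar>
      \<le> (LINT y:{0<..}|lborel. \<bar>\<omega>' y - \<omega> y\<bar> / y^2)"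
    using i i2 by (intro set_abs_bound) (auto simp: diff_divide_distrib[symmetric] abs_minus_commute)
  ultimately show ?thesis by (simp add: abs_mult divide_simps)
qed



lemma diff_bounds:
  assumes "\<omega> \<in> Da a" "\<omega>' \<in> Da a"
  shows "\<bar>\<omega>' y - \<omega> y\<bar> \<le> 1" "\<bar>\<omega>' y - \<omega> y\<bar> \<le> y^2"
  using Da_props(3,4,5)[OF assms(1), of y] Da_props(3,4,5)[OF assms(2), of y] by auto

lemma rho_pos: "0 < rho x" and rho_le1: "rho x \<le> 1"
  unfolding rho_def by (auto simp: add_pos_nonneg)

lemma wnorm_bound:
  assumes "\<omega> \<in> Da a" "\<omega>' \<in> Da a"
  shows "\<bar>\<omega>' y - \<omega> y\<bar> \<le> wnorm (\<lambda>x. \<omega>' x - \<omega> x) * sqrt (1 + \<bar>y\<bar>)"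
proof -
  have bdd: "bdd_above (range (\<lambda>x. \<bar>rho x * (\<omega>' x - \<omega> x)\<bar>))"
  proof (rule bdd_aboveI)
    fix z assume "z \<in> range (\<lambda>x. \<bar>rho x * (\<omega>' x - \<omega> x)\<bar>)"
    then obtain x where z: "z = \<bar>rho x * (\<omega>' x - \<omega> x)\<bar>" by auto
    have "\<bar>rho x\<bar> * \<bar>\<omega>' x - \<omega> x\<bar> \<le> 1 * 1"
      using rho_pos[of x] rho_le1[of x] diff_bounds(1)[OF assms, of x] by (intro mult_mono) auto
    then show "z \<le> 1" using z by (simp add: abs_mult)
  qed
  have "\<bar>rho y * (\<omega>' y - \<omega> y)\<bar> \<le> wnorm (\<lambda>x. \<omega>' x - \<omega> x)"
    unfolding wnorm_def by (rule cSUP_upper[OF _ bdd]) simp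
  moreover have "\<bar>rho y * (\<omega>' y - \<omega> y)\<bar> = \<bar>\<omega>' y - \<omega> y\<bar> / sqrt (1 + \<bar>y\<bar>)"
    by (simp add: rho_def abs_mult)
  moreover have "0 < sqrt (1 + \<bar>y\<bar>)" by (simp add: add_pos_nonneg)
  ultimately show ?thesis by (simp add: divide_le_eq)
qed

lemma Tdiff_int:
  assumes "\<omega> \<in> Da a" "\<omega>' \<in> Da a"
  shows "set_integrable lborel {0<..} (\<lambda>y. \<bar>fx x y\<bar> * \<bar>\<omega>' y - \<omega> y\<bar>)"
proof (rule set_integrable_bound[OF fx_abs(1)])
  note [measurable] = Da_props(8)[OF assms(1)] Da_props(8)[OF assms(2)]
  show "set_borel_measurable lborel {0<..} (\<lambda>y. \<bar>fx x y\<bar> * \<bar>\<omega>' y - \<omega> y\<bar>)"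
    by (intro set_meas) measurable
  show "AE y in lborel. y \<in> {0<..} \<longrightarrow> norm (\<bar>fx x y\<bar> * \<bar>\<omega>' y - \<omega> y\<bar>) \<le> norm \<bar>fx x y\<bar>"
    using diff_bounds(1)[OF assms] by (intro AE_I2) (auto simp: abs_mult intro!: mult_left_le)
qed

lemma rdiff_int:
  assumes "\<omega> \<in> Da a" "\<omega>' \<in> Da a"
  shows "set_integrable lborel {0<..} (\<lambda>y. \<bar>\<omega>' y - \<omega> y\<bar> / y^2)"
proof (rule set_integrable_bound[OF w0_int])
  note [measurable] = Da_props(8)[OF assms(1)] Da_props(8)[OF assms(2)]
  show "set_borel_measurable lborel {0<..} (\<lambda>y. \<bar>\<omega>' y - \<omega> y\<bar> / y^2)"
    by (intro set_meas) measurable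
  show "AE y in lborel. y \<in> {0<..} \<longrightarrow> norm (\<bar>\<omega>' y - \<omega> y\<bar> / y^2) \<le> norm (2 * inverse (1 + y^2))"
  proof (intro AE_I2 impI)
    fix y :: real assume y: "y \<in> {0<..}"
    have "\<bar>\<omega>' y - \<omega> y\<bar> / y^2 \<le> 2 * inverse (1 + y^2)"
      using diff_bounds[OF assms, of y] y by (intro r_bound) auto
    moreover have "0 \<le> 2 * inverse (1 + y^2)" by (simp add: add_pos_nonneg)
    ultimately show "norm (\<bar>\<omega>' y - \<omega> y\<bar> / y^2) \<le> norm (2 * inverse (1 + y^2))" by simp
  qed
qed

definition PhiT :: "real \<Rightarrow> real \<Rightarrow> real" where
  "PhiT M \<delta> = (LINT t:{0<..}|lborel. \<bar>fx 1 t\<bar> * min 1 (\<delta> * sqrt (1 + M * t)))"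

definition Phir :: "real \<Rightarrow> real" where
  "Phir \<delta> = (LINT y:{0<..}|lborel. min (2 * inverse (1 + y^2)) (\<delta> * sqrt (1 + y) / y^2))"

lemma PhiT_int:
  assumes "0 \<le> \<delta>" "0 \<le> M"
  shows "set_integrable lborel {0<..} (\<lambda>t. \<bar>fx 1 t\<bar> * min 1 (\<delta> * sqrt (1 + M * t)))"
proof (rule set_integrable_bound[OF fx_abs(1)])
  show "set_borel_measurable lborel {0<..} (\<lambda>t. \<bar>fx 1 t\<bar> * min 1 (\<delta> * sqrt (1 + M * t)))"
    by (intro set_meas) measurable
  show "AE y in lborel. y \<in> {0<..} \<longrightarrow> norm (\<bar>fx 1 y\<bar> * min 1 (\<delta> * sqrt (1 + M * y))) \<le> norm \<bar>fx 1 y\<bar>"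
  proof (intro AE_I2 impI)
    fix y :: real assume y: "y \<in> {0<..}"
    have "0 \<le> \<delta> * sqrt (1 + M * y)" using assms y by simp
    then have "\<bar>min 1 (\<delta> * sqrt (1 + M * y))\<bar> \<le> 1" by simp
    then show "norm (\<bar>fx 1 y\<bar> * min 1 (\<delta> * sqrt (1 + M * y))) \<le> norm \<bar>fx 1 y\<bar>"
      by (auto simp: abs_mult intro!: mult_left_le)
  qed
qed

lemma Phir_int:
  assumes "0 \<le> \<delta>"
  shows "set_integrable lborel {0<..} (\<lambda>y. min (2 * inverse (1 + y^2)) (\<delta> * sqrt (1 + y) / y^2))"
proof (rule set_integrable_bound[OF w0_int])
  show "set_borel_measurable lborel {0<..} (\<lambda>y. min (2 * inverse (1 + y^2)) (\<delta> * sqrt (1 + y) / y^2))"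
    by (intro set_meas) measurable
  show "AE y in lborel. y \<in> {0<..} \<longrightarrow> norm (min (2 * inverse (1 + y^2)) (\<delta> * sqrt (1 + y) / y^2)) \<le> norm (2 * inverse (1 + y^2))"
  proof (intro AE_I2 impI)
    fix y :: real assume y: "y \<in> {0<..}"
    have "0 \<le> 2 * inverse (1 + y^2)" by (simp add: add_pos_nonneg)
    moreover have "0 \<le> \<delta> * sqrt (1 + y) / y^2" using assms y by simp
    ultimately show "norm (min (2 * inverse (1 + y^2)) (\<delta> * sqrt (1 + y) / y^2)) \<le> norm (2 * inverse (1 + y^2))"
      by simp
  qed
qed

lemma T_close:
  assumes "\<omega> \<in> Da a" "\<omega>' \<in> Da a" "\<bar>x\<bar> \<le> M" "0 \<le> \<delta>"
    and bd: "\<And>y. \<bar>\<omega>' y - \<omega> y\<bar> \<le> \<delta> * sqrt (1 + \<bar>y\<bar>)"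
  shows "\<bar>Top \<omega>' x - Top \<omega> x\<bar> \<le> M / pi * PhiT M \<delta>"
proof -
  have M0: "0 \<le> M" using assms(3) by linarith
  have P0: "0 \<le> PhiT M \<delta>" unfolding PhiT_def set_lebesgue_integral_def
    using assms(4) M0 by (intro integral_nonneg_AE AE_I2) (auto simp: indicator_def)
  let ?I = "LINT y:{0<..}|lborel. \<bar>fx x y\<bar> * \<bar>\<omega>' y - \<omega> y\<bar>"
  have "?I \<le> \<bar>x\<bar> * PhiT M \<delta>"
  proof (cases "x = 0")
    case True then show ?thesis by (simp add: fx0)
  next
    case False
    have e: "?I = \<bar>x\<bar> * (LINT t:{0<..}|lborel. \<bar>fx x (\<bar>x\<bar> * t)\<bar> * \<bar>\<omega>' (\<bar>x\<bar> * t) - \<omega> (\<bar>x\<bar> * t)\<bar>)"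
      by (rule scale_integral(1)[OF False])
    have i1: "set_integrable lborel {0<..} (\<lambda>t. \<bar>fx x (\<bar>x\<bar> * t)\<bar> * \<bar>\<omega>' (\<bar>x\<bar> * t) - \<omega> (\<bar>x\<bar> * t)\<bar>)"
      using scale_integral(2)[OF False, of "\<lambda>y. \<bar>fx x y\<bar> * \<bar>\<omega>' y - \<omega> y\<bar>"] Tdiff_int[OF assms(1,2)] by simp
    have "(LINT t:{0<..}|lborel. \<bar>fx x (\<bar>x\<bar> * t)\<bar> * \<bar>\<omega>' (\<bar>x\<bar> * t) - \<omega> (\<bar>x\<bar> * t)\<bar>) \<le> PhiT M \<delta>"
      unfolding PhiT_def
    proof (rule set_integral_mono[OF i1 PhiT_int[OF assms(4) M0]])
      fix t :: real assume t: "t \<in> {0<..}"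
      have "\<bar>\<omega>' (\<bar>x\<bar> * t) - \<omega> (\<bar>x\<bar> * t)\<bar> \<le> \<delta> * sqrt (1 + \<bar>x\<bar> * t)"
        using bd[of "\<bar>x\<bar> * t"] t by (simp add: abs_mult)
      also have "\<dots> \<le> \<delta> * sqrt (1 + M * t)"
        using t assms(3,4) by (intro mult_left_mono) (auto intro!: mult_right_mono)
      finally have "\<bar>\<omega>' (\<bar>x\<bar> * t) - \<omega> (\<bar>x\<bar> * t)\<bar> \<le> min 1 (\<delta> * sqrt (1 + M * t))"
        using diff_bounds(1)[OF assms(1,2)] by simp
      then show "\<bar>fx x (\<bar>x\<bar> * t)\<bar> * \<bar>\<omega>' (\<bar>x\<bar> * t) - \<omega> (\<bar>x\<bar> * t)\<bar> \<le> \<bar>fx 1 t\<bar> * min 1 (\<delta> * sqrt (1 + M * t))"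
        using fx_scale[OF False, of t] t by (auto intro!: mult_left_mono)
    qed
    then show ?thesis unfolding e by (simp add: mult_left_mono)
  qed
  also have "\<dots> \<le> M * PhiT M \<delta>" using assms(3) P0 by (intro mult_right_mono) auto
  finally have "?I \<le> M * PhiT M \<delta>" .
  then have "(1/pi) * ?I \<le> (1/pi) * (M * PhiT M \<delta>)" by (intro mult_left_mono) auto
  then show ?thesis using Top_diff[OF assms(1,2), of x] by simp
qed

lemma r_close:
  assumes "\<omega> \<in> Da a" "\<omega>' \<in> Da a" "0 \<le> \<delta>"
    and bd: "\<And>y. \<bar>\<omega>' y - \<omega> y\<bar> \<le> \<delta> * sqrt (1 + \<bar>y\<bar>)"
  shows "\<bar>rfun \<omega>' - rfun \<omega>\<bar> \<le> Phir \<delta> / pi"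
proof -
  have "(LINT y:{0<..}|lborel. \<bar>\<omega>' y - \<omega> y\<bar> / y^2) \<le> Phir \<delta>"
    unfolding Phir_def
  proof (rule set_integral_mono[OF rdiff_int[OF assms(1,2)] Phir_int[OF assms(3)]])
    fix y :: real assume y: "y \<in> {0<..}"
    have "\<bar>\<omega>' y - \<omega> y\<bar> / y^2 \<le> 2 * inverse (1 + y^2)"
      using diff_bounds[OF assms(1,2), of y] y by (intro r_bound) auto
    moreover have "\<bar>\<omega>' y - \<omega> y\<bar> / y^2 \<le> \<delta> * sqrt (1 + y) / y^2"
      using bd[of y] y by (intro divide_right_mono) auto
    ultimately show "\<bar>\<omega>' y - \<omega> y\<bar> / y^2 \<le> min (2 * inverse (1 + y^2)) (\<delta> * sqrt (1 + y) / y^2)"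
      by simp
  qed
  then show ?thesis using r_diff[OF assms(1,2)] by (simp add: divide_simps)
qed



lemma PhiT_lim:
  assumes "0 \<le> M"
  shows "(\<lambda>n. PhiT M (inverse (real (Suc n)))) \<longlonglongrightarrow> 0"
proof -
  let ?d = "\<lambda>n::nat. inverse (real (Suc n))"
  let ?s = "\<lambda>n (t::real). indicator {0<..} t *\<^sub>R (\<bar>fx 1 t\<bar> * min 1 (?d n * sqrt (1 + M * t)))"
  have "(\<lambda>n. integral\<^sup>L lborel (?s n)) \<longlonglongrightarrow> integral\<^sup>L lborel (\<lambda>t::real. 0 :: real)"
  proof (rule Bochner_Integration.integral_dominated_convergence[where w = "\<lambda>t::real. indicator {0<..} t *\<^sub>R \<bar>fx 1 t\<bar>" and s = ?s and f = "\<lambda>t. 0" and M = lborel])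
    show "(\<lambda>t. 0::real) \<in> borel_measurable lborel" by simp
    show "?s n \<in> borel_measurable lborel" for n by measurable
    show "integrable lborel (\<lambda>t. indicator {0<..} t *\<^sub>R \<bar>fx 1 t\<bar>)"
      using fx_abs(1)[of 1] unfolding set_integrable_def .
    show "AE t in lborel. (\<lambda>n. ?s n t) \<longlonglongrightarrow> 0"
    proof (intro AE_I2)
      fix t :: real
      have "(\<lambda>n. ?d n * sqrt (1 + M * t)) \<longlonglongrightarrow> 0 * sqrt (1 + M * t)"
        by (intro tendsto_mult LIMSEQ_inverse_real_of_nat tendsto_const)
      then have "(\<lambda>n. min 1 (?d n * sqrt (1 + M * t))) \<longlonglongrightarrow> min 1 0"
        by (intro tendsto_min tendsto_const) simp
      then have "(\<lambda>n. indicator {0<..} t *\<^sub>R (\<bar>fx 1 t\<bar> * min 1 (?d n * sqrt (1 + M * t))))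
          \<longlonglongrightarrow> indicator {0<..} t *\<^sub>R (\<bar>fx 1 t\<bar> * min 1 0)"
        by (intro tendsto_scaleR tendsto_mult tendsto_const)
      then show "(\<lambda>n. ?s n t) \<longlonglongrightarrow> 0" by simp
    qed
    show "AE t in lborel. norm (?s n t) \<le> indicator {0<..} t *\<^sub>R \<bar>fx 1 t\<bar>" for n
    proof (intro AE_I2)
      fix t :: real
      show "norm (?s n t) \<le> indicator {0<..} t *\<^sub>R \<bar>fx 1 t\<bar>"
      proof (cases "t > 0")
        case True
        have "0 \<le> ?d n * sqrt (1 + M * t)" using True assms by simp
        then have "\<bar>min 1 (?d n * sqrt (1 + M * t))\<bar> \<le> 1" by simp
        then show ?thesis using True by (auto simp: abs_mult intro!: mult_left_le)
      qed simp
    qed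
  qed
  then show ?thesis unfolding PhiT_def set_lebesgue_integral_def by simp
qed

lemma Phir_lim:
  shows "(\<lambda>n. Phir (inverse (real (Suc n)))) \<longlonglongrightarrow> 0"
proof -
  let ?d = "\<lambda>n::nat. inverse (real (Suc n))"
  let ?s = "\<lambda>n (y::real). indicator {0<..} y *\<^sub>R min (2 * inverse (1 + y^2)) (?d n * sqrt (1 + y) / y^2)"
  have "(\<lambda>n. integral\<^sup>L lborel (?s n)) \<longlonglongrightarrow> integral\<^sup>L lborel (\<lambda>t::real. 0 :: real)"
  proof (rule Bochner_Integration.integral_dominated_convergence[where w = "\<lambda>y::real. indicator {0<..} y *\<^sub>R (2 * inverse (1 + y^2))" and s = ?s and f = "\<lambda>t. 0" and M = lborel])
    show "(\<lambda>t. 0::real) \<in> borel_measurable lborel" by simp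
    show "?s n \<in> borel_measurable lborel" for n by measurable
    show "integrable lborel (\<lambda>y::real. indicator {0<..} y *\<^sub>R (2 * inverse (1 + y^2)))"
      using w0_int unfolding set_integrable_def .
    show "AE t in lborel. (\<lambda>n. ?s n t) \<longlonglongrightarrow> 0"
    proof (intro AE_I2)
      fix y :: real
      show "(\<lambda>n. ?s n y) \<longlonglongrightarrow> 0"
      proof (cases "y > 0")
        case True
        have "(\<lambda>n. ?d n * sqrt (1 + y) / y^2) \<longlonglongrightarrow> 0 * sqrt (1 + y) / y^2"
          by (intro tendsto_mult tendsto_divide LIMSEQ_inverse_real_of_nat tendsto_const) (use True in simp)
        then have "(\<lambda>n. min (2 * inverse (1 + y^2)) (?d n * sqrt (1 + y) / y^2)) \<longlonglongrightarrow> min (2 * inverse (1 + y^2)) 0"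
          by (intro tendsto_min tendsto_const) simp
        moreover have "min (2 * inverse (1 + y^2)) 0 = 0" by (simp add: add_pos_nonneg)
        ultimately show ?thesis using True by simp
      qed simp
    qed
    show "AE t in lborel. norm (?s n t) \<le> indicator {0<..} t *\<^sub>R (2 * inverse (1 + t^2))" for n
    proof (intro AE_I2)
      fix y :: real
      show "norm (?s n y) \<le> indicator {0<..} y *\<^sub>R (2 * inverse (1 + y^2))"
      proof (cases "y > 0")
        case True
        have "0 \<le> 2 * inverse (1 + y^2)" by (simp add: add_pos_nonneg)
        moreover have "0 \<le> ?d n * sqrt (1 + y) / y^2" using True by simp
        ultimately show ?thesis using True by simp
      qed simp
    qed
  qed
  then show ?thesis unfolding Phir_def set_lebesgue_integral_def by simp
qed



lemma alg_bound:
  fixes T T' r r' A1 A2 B \<epsilon> :: real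
  assumes r0: "0 < r" and rr': "r/2 \<le> r'" and T0: "0 \<le> T" and TB: "T \<le> B"
    and dT: "\<bar>T' - T\<bar> \<le> A1" and dr: "\<bar>r - r'\<bar> \<le> A2"
    and A1: "A1 = \<epsilon> * r / 8" and BA2: "B * A2 \<le> \<epsilon> * r^2 / 8" and A20: "0 \<le> A2"
  shows "\<bar>T'/r' - T/r\<bar> \<le> \<epsilon> / 2"
proof -
  have r'0: "0 < r'" using r0 rr' by linarith
  have e: "T'/r' - T/r = (T' - T)/r' + T * (r - r') / (r * r')"
    using r0 r'0 by (simp add: field_simps)
  have b1: "\<bar>(T' - T)/r'\<bar> \<le> A1 / (r/2)"
    unfolding abs_divide using r'0 r0 rr' dT
    by (intro frac_le) auto
  have b2: "\<bar>T * (r - r') / (r * r')\<bar> \<le> (B * A2) / (r * (r/2))"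
  proof -
    have "\<bar>T * (r - r') / (r * r')\<bar> = (T * \<bar>r - r'\<bar>) / (r * r')"
      using T0 r0 r'0 by (simp add: abs_mult abs_divide)
    also have "\<dots> \<le> (B * A2) / (r * (r/2))"
    proof (rule frac_le)
      show "0 \<le> B * A2" using T0 TB A20 by simp
      show "T * \<bar>r - r'\<bar> \<le> B * A2" using T0 TB dr by (intro mult_mono) auto
      show "0 < r * (r/2)" using r0 by simp
      show "r * (r/2) \<le> r * r'" using r0 rr' by (intro mult_left_mono) auto
    qed
    finally show ?thesis .
  qed
  have c1: "A1 / (r/2) = \<epsilon> / 4" using r0 A1 by (simp add: field_simps)
  have c2: "(B * A2) / (r * (r/2)) \<le> \<epsilon> / 4"
  proof -
    have "(B * A2) / (r * (r/2)) \<le> (\<epsilon> * r^2 / 8) / (r * (r/2))"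
      using BA2 r0 by (intro divide_right_mono) auto
    also have "\<dots> = \<epsilon> / 4" using r0 by (simp add: field_simps power2_eq_square)
    finally show ?thesis .
  qed
  have "\<bar>T'/r' - T/r\<bar> \<le> \<bar>(T' - T)/r'\<bar> + \<bar>T * (r - r') / (r * r')\<bar>"
    unfolding e by (rule abs_triangle_ineq)
  then show ?thesis using b1 b2 c1 c2 by linarith
qed

theorem mainTheorem12:
  fixes a :: real
  assumes "a < 1"
  shows "\<forall>\<omega>\<in>Da a. \<forall>\<epsilon>>0. \<exists>\<delta>>0. \<forall>\<omega>'\<in>Da a.
           wnorm (\<lambda>x. \<omega>' x - \<omega> x) < \<delta> \<longrightarrow> wnorm (\<lambda>x. Ra a \<omega>' x - Ra a \<omega> x) < \<epsilon>"
proof (intro ballI allI impI)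
  fix \<omega> and \<epsilon> :: real
  assume \<omega>: "\<omega> \<in> Da a" and \<epsilon>: "\<epsilon> > 0"
  define r where "r = rfun \<omega>"
  have r0: "0 < r" using r_pos[OF \<omega>] r_def by simp
  define M where "M = 4 / \<epsilon>^2"
  have M0: "0 < M" using \<epsilon> by (simp add: M_def)
  define B where "B = M * KK / pi"
  have B0: "0 \<le> B" using M0 KK_nonneg by (simp add: B_def)
  define A1 where "A1 = \<epsilon> * r / 8"
  define A2 where "A2 = min (r/2) (\<epsilon> * r^2 / (8 * (B + 1)))"
  have A1p: "0 < A1" using \<epsilon> r0 by (simp add: A1_def)
  have A2p: "0 < A2" using \<epsilon> r0 B0 by (simp add: A2_def)
  have BA2: "B * A2 \<le> \<epsilon> * r^2 / 8"
  proof -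
    have "B * A2 \<le> B * (\<epsilon> * r^2 / (8 * (B + 1)))" using B0 by (intro mult_left_mono) (auto simp: A2_def)
    also have "\<dots> = (B / (B + 1)) * (\<epsilon> * r^2 / 8)" using B0 by (simp add: field_simps)
    also have "\<dots> \<le> 1 * (\<epsilon> * r^2 / 8)" using B0 \<epsilon> by (intro mult_right_mono) auto
    finally show ?thesis by simp
  qed
  let ?d = "\<lambda>n::nat. inverse (real (Suc n))"
  have ev1: "eventually (\<lambda>n. PhiT M (?d n) < A1 * pi / M) sequentially"
    using M0 A1p by (intro order_tendstoD(2)[OF PhiT_lim]) auto
  have ev2: "eventually (\<lambda>n. Phir (?d n) < A2 * pi) sequentially"
    using A2p by (intro order_tendstoD(2)[OF Phir_lim]) auto
  obtain N where N: "PhiT M (?d N) < A1 * pi / M" "Phir (?d N) < A2 * pi"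
    using eventually_conj[OF ev1 ev2] unfolding eventually_sequentially by auto
  define \<delta> where "\<delta> = ?d N"
  have \<delta>0: "0 < \<delta>" by (simp add: \<delta>_def)
  show "\<exists>\<delta>>0. \<forall>\<omega>'\<in>Da a. wnorm (\<lambda>x. \<omega>' x - \<omega> x) < \<delta> \<longrightarrow> wnorm (\<lambda>x. Ra a \<omega>' x - Ra a \<omega> x) < \<epsilon>"
  proof (intro exI[of _ \<delta>] conjI ballI impI \<delta>0)
    fix \<omega>' assume \<omega>': "\<omega>' \<in> Da a" and w: "wnorm (\<lambda>x. \<omega>' x - \<omega> x) < \<delta>"
    have bd: "\<bar>\<omega>' y - \<omega> y\<bar> \<le> \<delta> * sqrt (1 + \<bar>y\<bar>)" for y
    proof -
      have "\<bar>\<omega>' y - \<omega> y\<bar> \<le> wnorm (\<lambda>x. \<omega>' x - \<omega> x) * sqrt (1 + \<bar>y\<bar>)" by (rule wnorm_bound[OF \<omega> \<omega>'])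
      also have "\<dots> \<le> \<delta> * sqrt (1 + \<bar>y\<bar>)" using w by (intro mult_right_mono) auto
      finally show ?thesis .
    qed
    define r' where "r' = rfun \<omega>'"
    have rr: "\<bar>r - r'\<bar> \<le> A2"
    proof -
      have "\<bar>r' - r\<bar> \<le> Phir \<delta> / pi" unfolding r_def r'_def using \<delta>0 bd by (intro r_close[OF \<omega> \<omega>']) auto
      also have "\<dots> \<le> A2" using N(2) by (simp add: \<delta>_def divide_simps)
      finally show ?thesis by (simp add: abs_minus_commute)
    qed
    have "A2 \<le> r/2" unfolding A2_def by (rule min.cobounded1)
    then have r'r: "r/2 \<le> r'" using rr abs_le_iff[of "r - r'" A2] by linarith
    have r'0: "0 < r'" using r'r r0 by linarith
    have Tc: "\<bar>Top \<omega>' x - Top \<omega> x\<bar> \<le> A1" if "\<bar>x\<bar> \<le> M" for x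
    proof -
      have "\<bar>Top \<omega>' x - Top \<omega> x\<bar> \<le> M / pi * PhiT M \<delta>" using that \<delta>0 bd by (intro T_close[OF \<omega> \<omega>']) auto
      also have "\<dots> \<le> M / pi * (A1 * pi / M)" using N(1) M0 by (intro mult_left_mono) (auto simp: \<delta>_def)
      also have "\<dots> = A1" using M0 by simp
      finally show ?thesis .
    qed
    have key: "rho x * \<bar>Ra a \<omega>' x - Ra a \<omega> x\<bar> \<le> \<epsilon> / 2" for x
    proof (cases "\<bar>x\<bar> \<le> M")
      case True
      have T0: "0 \<le> Top \<omega> x" "0 \<le> Top \<omega>' x" using Top_nonneg[OF \<omega>] Top_nonneg[OF \<omega>'] by auto
      have TB: "Top \<omega> x \<le> B"
      proof -
        have "Top \<omega> x \<le> \<bar>x\<bar> * KK / pi" by (rule Top_le[OF \<omega>])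
        also have "\<dots> \<le> M * KK / pi" using True KK_nonneg by (intro divide_right_mono mult_right_mono) auto
        finally show ?thesis by (simp add: B_def)
      qed
      have "\<bar>Ra a \<omega>' x - Ra a \<omega> x\<bar> \<le> \<bar>Top \<omega>' x / r' - Top \<omega> x / r\<bar>"
        unfolding Ra_ga r_def[symmetric] r'_def[symmetric]
        using T0 r0 r'0 by (intro ga_lip[OF assms]) auto
      also have "\<dots> \<le> \<epsilon> / 2"
        by (rule alg_bound[OF r0 r'r T0(1) TB Tc[OF True] rr A1_def BA2]) (use A2p in simp)
      finally have "\<bar>Ra a \<omega>' x - Ra a \<omega> x\<bar> \<le> \<epsilon> / 2" .
      moreover have "rho x * \<bar>Ra a \<omega>' x - Ra a \<omega> x\<bar> \<le> 1 * \<bar>Ra a \<omega>' x - Ra a \<omega> x\<bar>"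
        using rho_le1[of x] by (intro mult_right_mono) auto
      ultimately show ?thesis by simp
    next
      case False
      have b: "0 \<le> Top \<omega> x / r" "0 \<le> Top \<omega>' x / r'"
        using Top_nonneg[OF \<omega>] Top_nonneg[OF \<omega>'] r0 r'0 by auto
      have d1: "\<bar>Ra a \<omega>' x - Ra a \<omega> x\<bar> \<le> 1"
        unfolding Ra_ga r_def[symmetric] r'_def[symmetric]
        using ga_bounds[OF assms b(1)] ga_bounds[OF assms b(2)] by linarith
      have "(2 / \<epsilon>)^2 \<le> 1 + \<bar>x\<bar>" using False \<epsilon> by (simp add: M_def power_divide)
      then have "2 / \<epsilon> \<le> sqrt (1 + \<bar>x\<bar>)" by (rule real_le_rsqrt)
      then have rx: "rho x \<le> \<epsilon> / 2" unfolding rho_def using \<epsilon>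
        by (simp add: divide_simps add_pos_nonneg) (simp add: mult.commute)
      have "rho x * \<bar>Ra a \<omega>' x - Ra a \<omega> x\<bar> \<le> (\<epsilon> / 2) * 1"
        using rx d1 rho_pos[of x] by (intro mult_mono) auto
      then show ?thesis by simp
    qed
    have "wnorm (\<lambda>x. Ra a \<omega>' x - Ra a \<omega> x) \<le> \<epsilon> / 2"
      unfolding wnorm_def
    proof (rule cSUP_least)
      show "UNIV \<noteq> {}" by simp
      fix x
      show "\<bar>rho x * (Ra a \<omega>' x - Ra a \<omega> x)\<bar> \<le> \<epsilon> / 2"
        using key[of x] rho_pos[of x] by (simp add: abs_mult)
    qed
    then show "wnorm (\<lambda>x. Ra a \<omega>' x - Ra a \<omega> x) < \<epsilon>" using \<epsilon> by simp
  qed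
qed

end
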